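(* Let $A_{n,m}=\langle\varphi,\psi,\tau\rangle$ be the subgroup of $\operatorname{Aut}(Y_{n,m})$ generated by the maps $\varphi,\psi,\tau$ defined below. Then: (1) $A_{1,0}\cong\{1\}$ and $A_{2,0}\cong A_{1,1}\cong C_2$; (2) $A_{n,0}\cong D_n$ for all $n>2$; (3) $A_{1,m}\cong C_2\times C_2$ for all $m>1$; (4) if $n>1$ and $m>0$, then (a) if at least one of $n,m$ is odd, $A_{n,m}\cong D_{2n}$; (b) otherwise ($n$ and $m$ both even), $A_{n,m}\cong D_n\times C_2$.
   Context: For integers $n\ge1$, $m\ge0$, the Yoke graph $Y_{n,m}$ has vertices the tuples $v=(v_0,\dots,v_{m+1})$ with $v_0,v_{m+1}\in\mathbb{Z}_n$, $v_1,\dots,v_m\in\{0,1\}$, $\sum v_i\equiv0\pmod n$; $u\sim v$ iff there is $0\le i\le m$ with $u_j=v_j$ for $j\notin\{i,i+1\}$ and either ($u_i=v_i+1$, $u_{i+1}=v_{i+1}-1$) or ($u_i=v_i-1$, $u_{i+1}=v_{i+1}+1$), bucket entries computed mod $n$. Define maps on vertices (bucket entries mod $n$): $\varphi(v_0,v_1,\dots,v_m,v_{m+1})=(v_0+1,v_1,\dots,v_m,v_{m+1}-1)$; $\psi(v_0,\dots,v_{m+1})=(v_{m+1},v_m,\dots,v_1,v_0)$; $\tau(v_0,v_1,\dots,v_m,v_{m+1})=(-v_0,1-v_1,\dots,1-v_m,-(m+v_{m+1}))$. These are automorphisms of $Y_{n,m}$. $C_k$ is the cyclic group of order $k$, and $D_k$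 is the dihedral group of order $2k$, $D_k=\langle g,h\mid g^k=h^2=1,\ hgh=g^{-1}\rangle$. *)

theory Defs
  imports "HOL-Algebra.Algebra"
begin

(* Vertices of Y_{n,m}: tuples (v_0,...,v_{m+1}) encoded as functions nat => int,
   with v i = 0 for i > m+1.  Buckets v_0, v_{m+1} are represented in {0..<n}. *)
definition yoke_verts :: "nat \<Rightarrow> nat \<Rightarrow> (nat \<Rightarrow> int) set" where
  "yoke_verts n m = {v. v 0 \<in> {0..<int n} \<and> v (m+1) \<in> {0..<int n}
      \<and> (\<forall>i\<in>{1..m}. v i \<in> {0,1}) \<and> (\<forall>i>m+1. v i = 0)
      \<and> (\<Sum>i\<le>m+1. v i) mod int n = 0}"

definition yoke_add :: "nat \<Rightarrow> nat \<Rightarrow> nat \<Rightarrow> int \<Rightarrow> int \<Rightarrow> int" where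
  "yoke_add n m i x d = (if i = 0 \<or> i = m+1 then (x + d) mod int n else x + d)"

definition yoke_adj :: "nat \<Rightarrow> nat \<Rightarrow> (nat \<Rightarrow> int) \<Rightarrow> (nat \<Rightarrow> int) \<Rightarrow> bool" where
  "yoke_adj n m u v \<longleftrightarrow> (\<exists>i\<le>m. (\<forall>j. j \<noteq> i \<and> j \<noteq> i+1 \<longrightarrow> u j = v j) \<and>
      ((u i = yoke_add n m i (v i) 1 \<and> u (i+1) = yoke_add n m (i+1) (v (i+1)) (-1)) \<or>
       (u i = yoke_add n m i (v i) (-1) \<and> u (i+1) = yoke_add n m (i+1) (v (i+1)) 1)))"

definition yoke_aut :: "nat \<Rightarrow> nat \<Rightarrow> ((nat \<Rightarrow> int) \<Rightarrow> (nat \<Rightarrow> int)) monoid" where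
  "yoke_aut n m = (BijGroup (yoke_verts n m))
     \<lparr>carrier := {f \<in> carrier (BijGroup (yoke_verts n m)).
        \<forall>u\<in>yoke_verts n m. \<forall>w\<in>yoke_verts n m. yoke_adj n m u w \<longleftrightarrow> yoke_adj n m (f u) (f w)}\<rparr>"

definition yoke_phi :: "nat \<Rightarrow> nat \<Rightarrow> (nat \<Rightarrow> int) \<Rightarrow> (nat \<Rightarrow> int)" where
  "yoke_phi n m v = (\<lambda>i. if i = 0 then (v 0 + 1) mod int n
                         else if i = m+1 then (v (m+1) - 1) mod int n else v i)"

definition yoke_psi :: "nat \<Rightarrow> nat \<Rightarrow> (nat \<Rightarrow> int) \<Rightarrow> (nat \<Rightarrow> int)" where
  "yoke_psi n m v = (\<lambda>i. if i \<le> m+1 then v (m+1-i) else 0)"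

definition yoke_tau :: "nat \<Rightarrow> nat \<Rightarrow> (nat \<Rightarrow> int) \<Rightarrow> (nat \<Rightarrow> int)" where
  "yoke_tau n m v = (\<lambda>i. if i = 0 then (- v 0) mod int n
                         else if i = m+1 then (- (int m + v (m+1))) mod int n
                         else if i \<le> m then 1 - v i else 0)"

definition yoke_A :: "nat \<Rightarrow> nat \<Rightarrow> ((nat \<Rightarrow> int) \<Rightarrow> (nat \<Rightarrow> int)) monoid" where
  "yoke_A n m = subgroup_generated (yoke_aut n m)
     {restrict (yoke_phi n m) (yoke_verts n m),
      restrict (yoke_psi n m) (yoke_verts n m),
      restrict (yoke_tau n m) (yoke_verts n m)}"

(* Dihedral group D_k of order 2k: (i,b) stands for g^i h^b, 0 <= i < k *)
definition dihedral_group :: "nat \<Rightarrow> (int \<times> bool) monoid" where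
  "dihedral_group k = \<lparr>carrier = {0..<int k} \<times> UNIV,
     monoid.mult = (\<lambda>(i,a) (j,b). ((i + (if a then - j else j)) mod int k, a \<noteq> b)),
     one = (0, False)\<rparr>"

abbreviation cyclic_group :: "nat \<Rightarrow> int monoid" where
  "cyclic_group k \<equiv> integer_mod_group k"

end

theory Submission
  imports Defs
begin

lemma dm: "(n::int) dvd (a mod n - a)"
  by (metis dvd_minus_iff minus_diff_eq mod_0_imp_dvd mod_diff_left_eq diff_self mod_0)
lemma dm2: "(n::int) dvd (a - a mod n)"
  using dm[of n a] by (metis dvd_minus_iff minus_diff_eq)
lemma mx:
  fixes a b c n :: int
  shows "((a mod n + b) + c) mod n = ((a + b) + c) mod n"
  "((a + b mod n) + c) mod n = ((a + b) + c) mod n"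
  "((a mod n - b) + c) mod n = ((a - b) + c) mod n"
  "((a - b mod n) + c) mod n = ((a - b) + c) mod n"
  "((a mod n + b) - c) mod n = ((a + b) - c) mod n"
  "((a + b mod n) - c) mod n = ((a + b) - c) mod n"
  "((a mod n - b) - c) mod n = ((a - b) - c) mod n"
  "((a - b mod n) - c) mod n = ((a - b) - c) mod n"
  "(a + (b mod n + c)) mod n = (a + (b + c)) mod n"
  "(a + (b + c mod n)) mod n = (a + (b + c)) mod n"
  "(a + (b mod n - c)) mod n = (a + (b - c)) mod n"
  "(a + (b - c mod n)) mod n = (a + (b - c)) mod n"
  "(a - (b mod n + c)) mod n = (a - (b + c)) mod n"
  "(a - (b + c mod n)) mod n = (a - (b + c)) mod n"
  "(- (a mod n) + b) mod n = (- a + b) mod n"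
  "(b + - (a mod n)) mod n = (b + - a) mod n"
  "(- (a mod n) - b) mod n = (- a - b) mod n"
  "(b - - (a mod n)) mod n = (b + a) mod n"
  "(- (a + b mod n)) mod n = (- (a + b)) mod n"
  "(- (a mod n + b)) mod n = (- (a + b)) mod n"
  "(- (a - b mod n)) mod n = (- (a - b)) mod n"
  "(- (a mod n - b)) mod n = (- (a - b)) mod n"
  by (simp_all add: mod_eq_dvd_iff, (smt (verit) dm dm2)+)


definition sh :: "nat \<Rightarrow> nat \<Rightarrow> int \<Rightarrow> (nat \<Rightarrow> int) \<Rightarrow> (nat \<Rightarrow> int)" where
  "sh n m k v = (\<lambda>i. if i = 0 then (v 0 + k) mod int n
                         else if i = m+1 then (v (m+1) - k) mod int n else v i)"

lemma phi_sh: "yoke_phi n m = sh n m 1"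
  by (rule ext)+ (simp add: yoke_phi_def sh_def)

lemma sum_split: fixes f :: "nat \<Rightarrow> int" and m :: nat
  shows "(\<Sum>i\<le>m+1. f i) = f 0 + (\<Sum>i\<in>{1..m}. f i) + f (m+1)"
proof -
  have "{..m+1} = insert 0 (insert (m+1) {1..m})" by fastforce
  then show ?thesis by (simp add: add.commute add.left_commute)
qed

lemma V_iff: "v \<in> yoke_verts n m \<longleftrightarrow> 0 \<le> v 0 \<and> v 0 < int n \<and> 0 \<le> v (m+1) \<and> v (m+1) < int n
   \<and> (\<forall>i. 1 \<le> i \<and> i \<le> m \<longrightarrow> v i = 0 \<or> v i = 1) \<and> (\<forall>i>m+1. v i = 0)
   \<and> (v 0 + (\<Sum>i\<in>{1..m}. v i) + v (m+1)) mod int n = 0"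
  unfolding yoke_verts_def sum_split by auto

lemma sh_V: assumes "v \<in> yoke_verts n m" "n > 0" shows "sh n m k v \<in> yoke_verts n m"
proof -
  have s: "(\<Sum>i\<in>{1..m}. sh n m k v i) = (\<Sum>i\<in>{1..m}. v i)"
    by (rule sum.cong) (auto simp: sh_def)
  have "(v 0 + (\<Sum>i\<in>{1..m}. v i) + v (m+1)) mod int n = 0" using assms unfolding V_iff by simp
  hence "((v 0 + k) mod int n + (\<Sum>i\<in>{1..m}. v i) + (v (m+1) - k) mod int n) mod int n = 0"
  proof -
    have e: "v 0 + k + (\<Sum>i\<in>{1..m}. v i) + (v (m+1) - k) = v 0 + (\<Sum>i\<in>{1..m}. v i) + v (m+1)" by simp
    show ?thesis by (simp only: mx mod_add_right_eq e) fact
  qed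
  then show ?thesis using assms unfolding V_iff s
    by (auto simp: sh_def)
qed

lemma psi_V: assumes "v \<in> yoke_verts n m" "n > 0" shows "yoke_psi n m v \<in> yoke_verts n m"
proof -
  have s: "(\<Sum>i\<in>{1..m}. yoke_psi n m v i) = (\<Sum>i\<in>{1..m}. v i)"
  proof -
    have "(\<Sum>i\<in>{1..m}. yoke_psi n m v i) = (\<Sum>i\<in>{1..m}. v (m+1-i))"
      by (rule sum.cong) (auto simp: yoke_psi_def)
    also have "\<dots> = (\<Sum>i\<in>{1..m}. v i)"
      using sum.atLeastAtMost_rev[of "\<lambda>i. v (m+1-i)" 1 m] by simp
    finally show ?thesis .
  qed
  have b: "v (Suc m - i) = 0 \<or> v (Suc m - i) = 1" if "1 \<le> i" "i \<le> m" for i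
  proof -
    have "1 \<le> m+1-i" "m+1-i \<le> m" using that by auto
    then show ?thesis using assms(1) that unfolding V_iff yoke_psi_def by auto
  qed
  show ?thesis using assms unfolding V_iff s
    by (auto simp: yoke_psi_def algebra_simps b)
qed

lemma tau_V: assumes "v \<in> yoke_verts n m" "n > 0" shows "yoke_tau n m v \<in> yoke_verts n m"
proof -
  have s: "(\<Sum>i\<in>{1..m}. yoke_tau n m v i) = int m - (\<Sum>i\<in>{1..m}. v i)"
  proof -
    have "(\<Sum>i\<in>{1..m}. yoke_tau n m v i) = (\<Sum>i\<in>{1..m}. 1 - v i)"
      by (rule sum.cong) (auto simp: yoke_tau_def)
    also have "\<dots> = int m - (\<Sum>i\<in>{1..m}. v i)"
      by (simp add: sum_subtractf)
    finally show ?thesis .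
  qed
  have d: "int n dvd (v 0 + (\<Sum>i\<in>{1..m}. v i) + v (m+1))"
    using assms unfolding V_iff by (simp add: mod_eq_0_iff_dvd)
  have "int n dvd - (v 0 + (\<Sum>i\<in>{1..m}. v i) + v (m+1))" using d by (simp only: dvd_minus_iff)
  hence "(- v 0 + (int m - (\<Sum>i\<in>{1..m}. v i)) + - (int m + v (m+1))) mod int n = 0"
  proof -
    have "(- v 0 + (int m - (\<Sum>i\<in>{1..m}. v i)) + - (int m + v (m+1))) = - (v 0 + (\<Sum>i\<in>{1..m}. v i) + v (m+1))"
      by simp
    then show ?thesis using \<open>int n dvd - (v 0 + (\<Sum>i\<in>{1..m}. v i) + v (m+1))\<close> by (simp only: mod_eq_0_iff_dvd)
  qed
  hence "((- v 0) mod int n + (int m - (\<Sum>i\<in>{1..m}. v i)) + (- (int m + v (m+1))) mod int n) mod int n = 0"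
    by (simp only: mx mod_add_right_eq)
  then show ?thesis using assms unfolding V_iff s
    by (auto simp: yoke_tau_def)
qed

lemma sh_sh: "sh n m k (sh n m k' v) = sh n m (k + k') v"
  by (rule ext) (simp add: sh_def mod_simps algebra_simps)

lemma sh_mod: "sh n m (k mod int n) v = sh n m k v"
  by (rule ext) (simp add: sh_def mod_simps)

lemma sh_0: "v \<in> yoke_verts n m \<Longrightarrow> sh n m 0 v = v"
  by (rule ext) (simp add: sh_def V_iff)

lemma psi_psi: "v \<in> yoke_verts n m \<Longrightarrow> yoke_psi n m (yoke_psi n m v) = v"
  by (rule ext) (auto simp: yoke_psi_def V_iff)

lemma tau_tau: "v \<in> yoke_verts n m \<Longrightarrow> yoke_tau n m (yoke_tau n m v) = v"
  by (rule ext) (auto simp: yoke_tau_def V_iff mod_simps)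

lemma psi_sh: "yoke_psi n m (sh n m k v) = sh n m (-k) (yoke_psi n m v)"
  by (rule ext) (auto simp: yoke_psi_def sh_def)

lemma tau_sh: "yoke_tau n m (sh n m k v) = sh n m (-k) (yoke_tau n m v)"
  by (rule ext) (auto simp: yoke_tau_def sh_def mx mod_simps algebra_simps; smt (verit))

lemma tau_psi: "v \<in> yoke_verts n m \<Longrightarrow> yoke_tau n m (yoke_psi n m v) = sh n m (int m) (yoke_psi n m (yoke_tau n m v))"
  by (rule ext) (auto simp: yoke_tau_def yoke_psi_def sh_def V_iff mx mod_simps algebra_simps; smt (verit))

definition T0 :: "nat \<Rightarrow> nat \<Rightarrow> int \<Rightarrow> bool \<Rightarrow> bool \<Rightarrow> (nat \<Rightarrow> int) \<Rightarrow> (nat \<Rightarrow> int)" where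
  "T0 n m k a b v = sh n m k (if a then yoke_psi n m (if b then yoke_tau n m v else v)
                                  else (if b then yoke_tau n m v else v))"

definition th :: "nat \<Rightarrow> nat \<Rightarrow> int \<Rightarrow> bool \<Rightarrow> bool \<Rightarrow> (nat \<Rightarrow> int) \<Rightarrow> (nat \<Rightarrow> int)" where
  "th n m k a b = restrict (T0 n m k a b) (yoke_verts n m)"

definition kc :: "nat \<Rightarrow> int \<Rightarrow> bool \<Rightarrow> bool \<Rightarrow> int \<Rightarrow> bool \<Rightarrow> int" where
  "kc m k a b k' a' = k + (if a = b then k' else -k') + (if b \<and> a' then (if a then - int m else int m) else 0)"

lemma T0_V: "n > 0 \<Longrightarrow> v \<in> yoke_verts n m \<Longrightarrow> T0 n m k a b v \<in> yoke_verts n m"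
  by (simp add: T0_def sh_V psi_V tau_V)

lemma T0_comp: assumes "n > 0" "v \<in> yoke_verts n m"
  shows "T0 n m k a b (T0 n m k' a' b' v) = T0 n m (kc m k a b k' a') (a \<noteq> a') (b \<noteq> b') v"
  using assms
  by (cases a; cases b; cases a'; cases b')
     (simp_all add: T0_def kc_def sh_V psi_V tau_V sh_sh psi_sh tau_sh tau_psi psi_psi tau_tau algebra_simps)

lemma adj_iff: "yoke_adj n m u w \<longleftrightarrow> (\<exists>i\<le>m. \<exists>d::int. (d = 1 \<or> d = -1) \<and> (\<forall>j. j \<noteq> i \<and> j \<noteq> i+1 \<longrightarrow> u j = w j) \<and>
      u i = yoke_add n m i (w i) d \<and> u (i+1) = yoke_add n m (i+1) (w (i+1)) (-d))"
  unfolding yoke_adj_def by (auto; force)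

lemma adj_sh: assumes "yoke_adj n m u w" shows "yoke_adj n m (sh n m k u) (sh n m k w)"
proof -
  obtain i d where i: "i \<le> m" "d = 1 \<or> d = -1" "\<forall>j. j \<noteq> i \<and> j \<noteq> i+1 \<longrightarrow> u j = w j"
     "u i = yoke_add n m i (w i) d" "u (i+1) = yoke_add n m (i+1) (w (i+1)) (-d)"
    using assms unfolding adj_iff by blast
  have f: "\<forall>j. j \<noteq> i \<and> j \<noteq> i+1 \<longrightarrow> sh n m k u j = sh n m k w j"
    using i(3) by (simp add: sh_def)
  have a: "sh n m k u i = yoke_add n m i (sh n m k w i) d"
    using i(1,4) by (auto simp: sh_def yoke_add_def mod_simps algebra_simps)
  have b: "sh n m k u (i+1) = yoke_add n m (i+1) (sh n m k w (i+1)) (-d)"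
    using i(1,5) by (auto simp: sh_def yoke_add_def mod_simps algebra_simps)
  show ?thesis unfolding adj_iff using i(1,2) f a b by blast
qed

lemma adj_psi: assumes "yoke_adj n m u w" shows "yoke_adj n m (yoke_psi n m u) (yoke_psi n m w)"
proof -
  obtain i d where i: "i \<le> m" "d = 1 \<or> d = -1" "\<forall>j. j \<noteq> i \<and> j \<noteq> i+1 \<longrightarrow> u j = w j"
     "u i = yoke_add n m i (w i) d" "u (i+1) = yoke_add n m (i+1) (w (i+1)) (-d)"
    using assms unfolding adj_iff by blast
  have f: "\<forall>j. j \<noteq> m - i \<and> j \<noteq> m - i + 1 \<longrightarrow> yoke_psi n m u j = yoke_psi n m w j"
  proof (intro allI impI)
    fix j assume j: "j \<noteq> m - i \<and> j \<noteq> m - i + 1"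
    show "yoke_psi n m u j = yoke_psi n m w j"
    proof (cases "j \<le> m+1")
      case True
      then have "m + 1 - j \<noteq> i" "m+1-j \<noteq> i+1" using j i(1) by auto
      then show ?thesis using True i(3) by (simp add: yoke_psi_def)
    qed (simp add: yoke_psi_def)
  qed
  have e1: "m + 1 - (m - i) = i + 1" "m + 1 - (m - i + 1) = i" using i(1) by auto
  have a: "yoke_psi n m u (m - i) = yoke_add n m (m - i) (yoke_psi n m w (m - i)) (-d)"
    using i(1,5) e1 by (auto simp: yoke_psi_def yoke_add_def)
  have b: "yoke_psi n m u (m - i + 1) = yoke_add n m (m - i + 1) (yoke_psi n m w (m - i + 1)) (- (-d))"
    using i(1,4) e1 by (auto simp: yoke_psi_def yoke_add_def)
  have "m - i \<le> m" "(-d) = 1 \<or> (-d) = -1" using i(2) by auto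
  then show ?thesis unfolding adj_iff using f a b by blast
qed

lemma adj_tau: assumes "yoke_adj n m u w" shows "yoke_adj n m (yoke_tau n m u) (yoke_tau n m w)"
proof -
  obtain i d where i: "i \<le> m" "d = 1 \<or> d = -1" "\<forall>j. j \<noteq> i \<and> j \<noteq> i+1 \<longrightarrow> u j = w j"
     "u i = yoke_add n m i (w i) d" "u (i+1) = yoke_add n m (i+1) (w (i+1)) (-d)"
    using assms unfolding adj_iff by blast
  have f: "\<forall>j. j \<noteq> i \<and> j \<noteq> i+1 \<longrightarrow> yoke_tau n m u j = yoke_tau n m w j"
    using i(3) by (simp add: yoke_tau_def)
  have a: "yoke_tau n m u i = yoke_add n m i (yoke_tau n m w i) (-d)"
    using i(1,4) by (auto simp: yoke_tau_def yoke_add_def mod_simps algebra_simps; smt (verit))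
  have b: "yoke_tau n m u (i+1) = yoke_add n m (i+1) (yoke_tau n m w (i+1)) (- (-d))"
    using i(1,5) by (auto simp: yoke_tau_def yoke_add_def mod_simps algebra_simps; smt (verit))
  have "(-d) = 1 \<or> (-d) = -1" using i(2) by auto
  then show ?thesis unfolding adj_iff using i(1) f a b by blast
qed

lemma adj_T0: "yoke_adj n m u w \<Longrightarrow> yoke_adj n m (T0 n m k a b u) (T0 n m k a b w)"
  unfolding T0_def by (intro adj_sh) (auto intro: adj_psi adj_tau)

abbreviation "VV n m \<equiv> yoke_verts n m"

lemma carrier_aut: "carrier (yoke_aut n m) = {f \<in> Bij (VV n m).
        \<forall>u\<in>VV n m. \<forall>w\<in>VV n m. yoke_adj n m u w \<longleftrightarrow> yoke_adj n m (f u) (f w)}"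
  by (simp add: yoke_aut_def BijGroup_def)

lemma mult_aut: "f \<in> carrier (yoke_aut n m) \<Longrightarrow> g \<in> carrier (yoke_aut n m) \<Longrightarrow>
   f \<otimes>\<^bsub>yoke_aut n m\<^esub> g = compose (VV n m) f g"
  by (simp add: yoke_aut_def BijGroup_def carrier_aut)

lemma one_aut: "\<one>\<^bsub>yoke_aut n m\<^esub> = (\<lambda>x\<in>VV n m. x)"
  by (simp add: yoke_aut_def BijGroup_def)

lemma subgroup_aut: "subgroup (carrier (yoke_aut n m)) (BijGroup (VV n m))"
proof
  show "carrier (yoke_aut n m) \<subseteq> carrier (BijGroup (VV n m))"
    by (auto simp: carrier_aut BijGroup_def)
next
  fix f g assume f: "f \<in> carrier (yoke_aut n m)" and g: "g \<in> carrier (yoke_aut n m)"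
  have fB: "f \<in> Bij (VV n m)" and gB: "g \<in> Bij (VV n m)" using f g by (auto simp: carrier_aut)
  have "f \<otimes>\<^bsub>BijGroup (VV n m)\<^esub> g = compose (VV n m) f g" using fB gB by (simp add: BijGroup_def)
  moreover have "compose (VV n m) f g \<in> Bij (VV n m)" using fB gB by (rule compose_Bij)
  moreover have "\<forall>u\<in>VV n m. \<forall>w\<in>VV n m. yoke_adj n m u w \<longleftrightarrow> yoke_adj n m (compose (VV n m) f g u) (compose (VV n m) f g w)"
  proof (intro ballI)
    fix u w assume u: "u \<in> VV n m" and w: "w \<in> VV n m"
    have gu: "g u \<in> VV n m" "g w \<in> VV n m" using gB u w by (auto simp: Bij_def bij_betw_def)
    show "yoke_adj n m u w \<longleftrightarrow> yoke_adj n m (compose (VV n m) f g u) (compose (VV n m) f g w)"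
      using f g u w gu by (simp add: compose_def carrier_aut)
  qed
  ultimately show "f \<otimes>\<^bsub>BijGroup (VV n m)\<^esub> g \<in> carrier (yoke_aut n m)" by (simp add: carrier_aut)
next
  show "\<one>\<^bsub>BijGroup (VV n m)\<^esub> \<in> carrier (yoke_aut n m)"
    by (simp add: carrier_aut BijGroup_def Bij_def bij_betw_def inj_on_def)
next
  fix f assume f: "f \<in> carrier (yoke_aut n m)"
  have fB: "f \<in> Bij (VV n m)" using f by (auto simp: carrier_aut)
  have bij: "bij_betw f (VV n m) (VV n m)" using fB by (simp add: Bij_def)
  have i: "inv\<^bsub>BijGroup (VV n m)\<^esub> f = (\<lambda>x\<in>VV n m. inv_into (VV n m) f x)" by (rule inv_BijGroup[OF fB])
  have iB: "(\<lambda>x\<in>VV n m. inv_into (VV n m) f x) \<in> Bij (VV n m)" by (rule restrict_inv_into_Bij[OF fB])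
  have "\<forall>u\<in>VV n m. \<forall>w\<in>VV n m. yoke_adj n m u w \<longleftrightarrow> yoke_adj n m (inv_into (VV n m) f u) (inv_into (VV n m) f w)"
  proof (intro ballI)
    fix u w assume u: "u \<in> VV n m" and w: "w \<in> VV n m"
    have a: "inv_into (VV n m) f u \<in> VV n m" "inv_into (VV n m) f w \<in> VV n m"
      using u w bij by (auto simp: bij_betw_def inv_into_into)
    have b: "f (inv_into (VV n m) f u) = u" "f (inv_into (VV n m) f w) = w"
      using u w bij by (auto simp: bij_betw_def f_inv_into_f)
    show "yoke_adj n m u w \<longleftrightarrow> yoke_adj n m (inv_into (VV n m) f u) (inv_into (VV n m) f w)"
      using f a b by (auto simp: carrier_aut)
  qed
  then show "inv\<^bsub>BijGroup (VV n m)\<^esub> f \<in> carrier (yoke_aut n m)"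
    using i iB by (simp add: carrier_aut)
qed

lemma group_aut: "group (yoke_aut n m)"
  unfolding yoke_aut_def
  using subgroup.subgroup_is_group[OF subgroup_aut group_BijGroup] by (simp add: yoke_aut_def)

lemma T0_00: "v \<in> VV n m \<Longrightarrow> T0 n m 0 False False v = v"
  by (simp add: T0_def sh_0)

lemma T0_inv: assumes "n > 0"
  shows "\<exists>k'. \<forall>v\<in>VV n m. T0 n m k' a b (T0 n m k a b v) = v \<and> T0 n m k a b (T0 n m k' a b v) = v"
proof -
  define k' where "k' = (if a = b then - (k + (if a \<and> b then - int m else 0)) else k)"
  have "kc m k' a b k a = 0" "kc m k a b k' a = 0" by (auto simp: kc_def k'_def)
  then show ?thesis using assms by (intro exI[of _ k']) (simp add: T0_comp T0_00)
qed

lemma th_carrier: assumes "n > 0" shows "th n m k a b \<in> carrier (yoke_aut n m)"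
proof -
  obtain k' where k': "\<forall>v\<in>VV n m. T0 n m k' a b (T0 n m k a b v) = v \<and> T0 n m k a b (T0 n m k' a b v) = v"
    using T0_inv[OF assms] by blast
  have bij: "bij_betw (th n m k a b) (VV n m) (VV n m)"
    by (rule bij_betw_byWitness[where f' = "T0 n m k' a b"])
       (use k' assms T0_V in \<open>auto simp: th_def\<close>)
  have adj: "yoke_adj n m u w \<longleftrightarrow> yoke_adj n m (th n m k a b u) (th n m k a b w)"
    if "u \<in> VV n m" "w \<in> VV n m" for u w
  proof
    assume "yoke_adj n m u w" then show "yoke_adj n m (th n m k a b u) (th n m k a b w)"
      using that by (simp add: th_def adj_T0)
  next
    assume "yoke_adj n m (th n m k a b u) (th n m k a b w)"
    then have "yoke_adj n m (T0 n m k' a b (T0 n m k a b u)) (T0 n m k' a b (T0 n m k a b w))"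
      using that by (simp add: th_def adj_T0)
    then show "yoke_adj n m u w" using k' that by simp
  qed
  show ?thesis using bij adj by (simp add: carrier_aut Bij_def th_def)
qed

lemma th_mult: assumes "n > 0"
  shows "th n m k a b \<otimes>\<^bsub>yoke_aut n m\<^esub> th n m k' a' b' = th n m (kc m k a b k' a') (a \<noteq> a') (b \<noteq> b')"
  using assms by (simp add: mult_aut th_carrier) (auto simp: compose_def th_def T0_V T0_comp)

lemma th_one: "th n m 0 False False = \<one>\<^bsub>yoke_aut n m\<^esub>"
  by (auto simp: one_aut th_def T0_00)

definition gens :: "nat \<Rightarrow> nat \<Rightarrow> ((nat \<Rightarrow> int) \<Rightarrow> (nat \<Rightarrow> int)) set" where
  "gens n m = {restrict (yoke_phi n m) (VV n m), restrict (yoke_psi n m) (VV n m), restrict (yoke_tau n m) (VV n m)}"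

lemma gens_th: assumes "n > 0" shows "gens n m = {th n m 1 False False, th n m 0 True False, th n m 0 False True}"
proof -
  have "restrict (yoke_phi n m) (VV n m) = th n m 1 False False"
    by (auto simp: th_def T0_def phi_sh)
  moreover have "restrict (yoke_psi n m) (VV n m) = th n m 0 True False"
    using assms by (auto simp: th_def T0_def sh_0 psi_V)
  moreover have "restrict (yoke_tau n m) (VV n m) = th n m 0 False True"
    using assms by (auto simp: th_def T0_def sh_0 tau_V)
  ultimately show ?thesis by (simp add: gens_def)
qed

definition SS :: "nat \<Rightarrow> nat \<Rightarrow> ((nat \<Rightarrow> int) \<Rightarrow> (nat \<Rightarrow> int)) set" where
  "SS n m = {th n m k a b | k a b. True}"

lemma carrier_A: assumes "n > 0" shows "carrier (yoke_A n m) = SS n m"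
proof -
  interpret G: group "yoke_aut n m" by (rule group_aut)
  have gc: "gens n m \<subseteq> carrier (yoke_aut n m)" using assms by (simp add: gens_th th_carrier)
  have gen: "generate (yoke_aut n m) (gens n m) = SS n m"
  proof
    have pw: "th n m k False False \<in> generate (yoke_aut n m) (gens n m)" for k
    proof (induction k rule: int_induct[where k = 0])
      case base
      then show ?case using th_one generate.one by metis
    next
      case (step1 i)
      have "th n m (i+1) False False = th n m 1 False False \<otimes>\<^bsub>yoke_aut n m\<^esub> th n m i False False"
        using assms by (simp add: th_mult kc_def add.commute)
      then show ?case using step1 generate.eng generate.incl assms by (metis gens_th insertI1)
    next
      case (step2 i)
      have iv: "inv\<^bsub>yoke_aut n m\<^esub> th n m 1 False False = th n m (-1) False False"
        using assms by (intro G.inv_equality) (simp_all add: th_mult kc_def th_carrier th_one)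
      have "th n m (i - 1) False False = inv\<^bsub>yoke_aut n m\<^esub> th n m 1 False False \<otimes>\<^bsub>yoke_aut n m\<^esub> th n m i False False"
        using assms by (simp add: iv th_mult kc_def)
      then show ?case using step2 generate.eng generate.inv assms by (metis gens_th insertI1)
    qed
    have pa: "th n m 0 a False \<in> generate (yoke_aut n m) (gens n m)" for a
      using pw[of 0] assms by (cases a) (auto simp: gens_th intro: generate.incl)
    have pb: "th n m 0 False b \<in> generate (yoke_aut n m) (gens n m)" for b
      using pw[of 0] assms by (cases b) (auto simp: gens_th intro: generate.incl)
    show "SS n m \<subseteq> generate (yoke_aut n m) (gens n m)"
    proof
      fix f assume "f \<in> SS n m"
      then obtain k a b where f: "f = th n m k a b" by (auto simp: SS_def)
      have "f = th n m k False False \<otimes>\<^bsub>yoke_aut n m\<^esub> (th n m 0 a False \<otimes>\<^bsub>yoke_aut n m\<^esub> th n m 0 False b)"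
        using assms by (simp add: f th_mult kc_def)
      then show "f \<in> generate (yoke_aut n m) (gens n m)" using pw pa pb generate.eng by metis
    qed
    have sub: "subgroup (SS n m) (yoke_aut n m)"
    proof (rule G.subgroupI)
      show "SS n m \<subseteq> carrier (yoke_aut n m)" using assms th_carrier by (auto simp: SS_def)
      show "SS n m \<noteq> {}" by (auto simp: SS_def)
    next
      fix f assume "f \<in> SS n m"
      then obtain k a b where f: "f = th n m k a b" by (auto simp: SS_def)
      define k' where "k' = (if a = b then - (k + (if a \<and> b then - int m else 0)) else k)"
      have "inv\<^bsub>yoke_aut n m\<^esub> f = th n m k' a b"
        using assms unfolding f by (intro G.inv_equality) (auto simp: th_mult kc_def th_carrier th_one k'_def)
      then show "inv\<^bsub>yoke_aut n m\<^esub> f \<in> SS n m" by (auto simp: SS_def)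
    next
      fix f g assume "f \<in> SS n m" "g \<in> SS n m"
      then show "f \<otimes>\<^bsub>yoke_aut n m\<^esub> g \<in> SS n m" using assms by (auto simp: SS_def th_mult) blast
    qed
    show "generate (yoke_aut n m) (gens n m) \<subseteq> SS n m"
      by (rule G.generate_subgroup_incl[OF _ sub]) (use assms in \<open>auto simp: gens_th SS_def\<close>)
  qed
  show ?thesis using gc gen
    by (simp add: yoke_A_def carrier_subgroup_generated gens_def Int_absorb1)
qed

lemma mult_A: "x \<otimes>\<^bsub>yoke_A n m\<^esub> y = x \<otimes>\<^bsub>yoke_aut n m\<^esub> y"
  by (simp add: yoke_A_def subgroup_generated_def)

lemma iso_enc:
  fixes H :: "('h, 'z) monoid_scheme" and f :: "'h \<Rightarrow> (nat \<Rightarrow> int) \<Rightarrow> (nat \<Rightarrow> int)"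
  assumes n: "n > 0"
    and img: "\<And>x. x \<in> carrier H \<Longrightarrow> f x \<in> SS n m"
    and sur: "\<And>k a b. \<exists>x\<in>carrier H. f x = th n m k a b"
    and inj: "inj_on f (carrier H)"
    and cl: "\<And>x y. x \<in> carrier H \<Longrightarrow> y \<in> carrier H \<Longrightarrow> x \<otimes>\<^bsub>H\<^esub> y \<in> carrier H"
    and hom: "\<And>x y. x \<in> carrier H \<Longrightarrow> y \<in> carrier H \<Longrightarrow> f (x \<otimes>\<^bsub>H\<^esub> y) = f x \<otimes>\<^bsub>yoke_aut n m\<^esub> f y"
  shows "yoke_A n m \<cong> H"
proof -
  have im: "f ` carrier H = SS n m"
  proof
    show "f ` carrier H \<subseteq> SS n m" using img by auto
    show "SS n m \<subseteq> f ` carrier H"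
    proof
      fix g assume "g \<in> SS n m"
      then obtain k a b where "g = th n m k a b" by (auto simp: SS_def)
      then show "g \<in> f ` carrier H" using sur[of k a b] by (metis image_eqI)
    qed
  qed
  have bf: "bij_betw f (carrier H) (SS n m)" using inj im by (simp add: bij_betw_def)
  define g where "g = inv_into (carrier H) f"
  have bg: "bij_betw g (SS n m) (carrier H)" unfolding g_def by (rule bij_betw_inv_into[OF bf])
  have "g \<in> hom (yoke_A n m) H"
  proof (unfold hom_def, intro CollectI conjI ballI)
    show "g \<in> carrier (yoke_A n m) \<rightarrow> carrier H" using bg n unfolding carrier_A[OF n] bij_betw_def by blast
  next
    fix a b assume a: "a \<in> carrier (yoke_A n m)" and b: "b \<in> carrier (yoke_A n m)"
    have a': "a \<in> f ` carrier H" "b \<in> f ` carrier H" using a b im unfolding carrier_A[OF n] by auto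
    have ga: "g a \<in> carrier H" "f (g a) = a" using a' unfolding g_def by (metis inv_into_into, metis f_inv_into_f)
    have gb: "g b \<in> carrier H" "f (g b) = b" using a' unfolding g_def by (metis inv_into_into, metis f_inv_into_f)
    have "a \<otimes>\<^bsub>yoke_A n m\<^esub> b = f (g a \<otimes>\<^bsub>H\<^esub> g b)"
      unfolding mult_A using ga gb hom[OF ga(1) gb(1)] by simp
    then show "g (a \<otimes>\<^bsub>yoke_A n m\<^esub> b) = g a \<otimes>\<^bsub>H\<^esub> g b"
      using cl[OF ga(1) gb(1)] inj unfolding g_def by (metis inv_into_f_f)
  qed
  then have "g \<in> iso (yoke_A n m) H" using bg unfolding iso_def carrier_A[OF n] by blast
  then show ?thesis by (rule is_isoI)
qed

lemma th_eqD: "th n m k a b = th n m k' a' b' \<Longrightarrow> v \<in> VV n m \<Longrightarrow> T0 n m k a b v i = T0 n m k' a' b' v i"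
  unfolding th_def by (drule fun_cong[of _ _ v]) simp

lemma T0_at0: "v \<in> VV n m \<Longrightarrow> T0 n m k a b v 0 =
   (v' + k) mod int n" if "v' = (if a then (if b then -(int m + v (m+1)) else v (m+1)) else (if b then - v 0 else v 0))"
  using that by (auto simp: T0_def sh_def yoke_psi_def yoke_tau_def mod_simps)

lemma T0_mid: "v \<in> VV n m \<Longrightarrow> 1 \<le> i \<Longrightarrow> i \<le> m \<Longrightarrow> T0 n m k a b v i =
   (if b then 1 - v (if a then m+1-i else i) else v (if a then m+1-i else i))"
  by (auto simp: T0_def sh_def yoke_psi_def yoke_tau_def)

lemma z0_V: "n > 0 \<Longrightarrow> (\<lambda>i. 0) \<in> VV n m"
  by (simp add: V_iff)

lemma u_V: "n > 1 \<Longrightarrow> (\<lambda>i::nat. if i = 0 then int n - 1 else if i = 1 then 1 else 0) \<in> VV n m"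
  by (cases m) (auto simp: V_iff)

lemma e1_V: "m > 0 \<Longrightarrow> (\<lambda>i::nat. if i = 1 then 1 else 0) \<in> VV 1 m"
  by (auto simp: V_iff)

lemma ndvd1: "int n dvd c \<Longrightarrow> 0 < c \<Longrightarrow> c < int n \<Longrightarrow> False"
  using zdvd_imp_le by fastforce
lemma ndvd2: "int n dvd c \<Longrightarrow> - int n < c \<Longrightarrow> c < 0 \<Longrightarrow> False"
  using ndvd1[of n "-c"] by simp

lemma T0_z0: "n > 0 \<Longrightarrow> T0 n m k a b (\<lambda>i. 0) 0 = ((if a \<and> b then - int m else 0) + k) mod int n"
  by (auto simp: T0_def sh_def yoke_psi_def yoke_tau_def mod_simps)

lemma T0_u0: "m > 0 \<Longrightarrow> T0 n m k a b (\<lambda>i::nat. if i = 0 then int n - 1 else if i = 1 then 1 else 0) 0 =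
   ((if a then (if b then -int m else 0) else (if b then 1 else int n - 1)) + k) mod int n"
  by (auto simp: T0_def sh_def yoke_psi_def yoke_tau_def mod_simps)

lemma T0_u0': "T0 n 0 k a False (\<lambda>i::nat. if i = 0 then int n - 1 else if i = 1 then 1 else 0) 0 =
   ((if a then 1 else int n - 1) + k) mod int n"
  by (auto simp: T0_def sh_def yoke_psi_def yoke_tau_def mod_simps)

lemma sep_b: assumes "n > 0" "m > 0" "th n m k a b = th n m k' a' b'" shows "b = b'"
proof -
  have "T0 n m k a b (\<lambda>i. 0) 1 = (if b then 1 else 0)" "T0 n m k' a' b' (\<lambda>i. 0) 1 = (if b' then 1 else 0)"
    using T0_mid[OF z0_V[OF assms(1)], of 1] assms(2) by auto
  then show ?thesis using th_eqD[OF assms(3) z0_V[OF assms(1)], of 1] by (auto split: if_splits)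
qed

lemma sep_k: assumes "n > 0" "th n m k a b = th n m k' a b" shows "k mod int n = k' mod int n"
proof -
  have "T0 n m k a b (\<lambda>i. 0) 0 = T0 n m k' a b (\<lambda>i. 0) 0" using th_eqD[OF assms(2) z0_V[OF assms(1)]] .
  then have "((if a \<and> b then - int m else 0) + k) mod int n = ((if a \<and> b then - int m else 0) + k') mod int n"
    using assms(1) by (simp add: T0_z0)
  then show ?thesis by (simp add: mod_eq_dvd_iff)
qed

lemma sep_a: assumes "n > 1" "th n m k a b = th n m k' a' b" "m > 0 \<or> \<not> b"
   "m = 0 \<Longrightarrow> n > 2"
  shows "a = a'"
proof (rule ccontr)
  assume ne: "a \<noteq> a'"
  have n0: "n > 0" using assms by simp
  let ?u = "\<lambda>i::nat. if i = 0 then int n - 1 else if i = 1 then 1 else 0"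
  have h1: "T0 n m k a b (\<lambda>i. 0) 0 = T0 n m k' a' b (\<lambda>i. 0) 0" using th_eqD[OF assms(2) z0_V[OF n0]] .
  have h2: "T0 n m k a b ?u 0 = T0 n m k' a' b ?u 0" using th_eqD[OF assms(2) u_V[OF assms(1)]] .
  have d1: "int n dvd ((if a then (if b then -int m else 0) else 0) + k - ((if a' then (if b then -int m else 0) else 0) + k'))"
    using h1 n0 by (simp add: T0_z0 mod_eq_dvd_iff) (smt (verit))
  show False
  proof (cases "m = 0")
    case False
    have d2: "int n dvd ((if a then (if b then -int m else 0) else (if b then 1 else int n - 1)) + k
       - ((if a' then (if b then -int m else 0) else (if b then 1 else int n - 1)) + k'))"
      using h2 False by (simp only: T0_u0 mod_eq_dvd_iff)
    from dvd_diff[OF d2 d1] ne assms(1) show False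
      by (cases a; cases b) (auto elim: ndvd1 ndvd2)
  next
    case True
    then have nb: "\<not> b" "n > 2" using assms by auto
    have d2: "int n dvd ((if a then 1 else int n - 1) + k - ((if a' then 1 else int n - 1) + k'))"
      using h2 True nb by (simp add: T0_u0' mod_eq_dvd_iff)
    from dvd_diff[OF d2 d1] ne nb show False
      by (cases a) (auto elim: ndvd1 ndvd2)
  qed
qed

lemma sep_a1: assumes "m > 1" "th 1 m k a b = th 1 m k' a' b" shows "a = a'"
proof -
  let ?e = "\<lambda>i::nat. if i = 1 then 1 else (0::int)"
  have eV: "?e \<in> VV 1 m" using e1_V assms(1) by simp
  have v: "T0 1 m k'' a'' b ?e 1 = (if a'' = b then 1 else 0)" for k'' a''
  proof -
    have "T0 1 m k'' a'' b ?e 1 = (if b then 1 - ?e (if a'' then m else 1) else ?e (if a'' then m else 1))"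
      using T0_mid[OF eV, where i=1 and k=k'' and a=a'' and b=b] assms(1) by simp
    also have "\<dots> = (if a'' = b then 1 else 0)" using assms(1) by (cases a''; cases b) auto
    finally show ?thesis .
  qed
  have "T0 1 m k a b ?e 1 = T0 1 m k' a' b ?e 1" by (rule th_eqD[OF assms(2) eV])
  then show ?thesis unfolding v by (cases a; cases a'; cases b) auto
qed

lemma th_V_eq: "(\<And>v. v \<in> VV n m \<Longrightarrow> T0 n m k a b v = T0 n m k' a' b' v) \<Longrightarrow> th n m k a b = th n m k' a' b'"
  unfolding th_def by (rule restrict_ext) simp

lemma th_mod: "th n m (k mod int n) a b = th n m k a b"
  by (rule th_V_eq) (simp add: T0_def sh_mod)

lemma th_m0: assumes "n > 0" shows "th n 0 k a True = th n 0 k (\<not> a) False"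
proof (rule th_V_eq)
  fix v assume v: "v \<in> VV n 0"
  have "yoke_tau n 0 v = yoke_psi n 0 v"
  proof
    fix i
    have "(v 0 + v 1) mod int n = 0" "0 \<le> v 0" "v 0 < int n" "0 \<le> v 1" "v 1 < int n" using v by (auto simp: V_iff)
    then have e1: "(- v 0) mod int n = v 1" and e2: "(- v 1) mod int n = v 0"
    proof -
      assume h: "(v 0 + v 1) mod int n = 0" "0 \<le> v 0" "v 0 < int n" "0 \<le> v 1" "v 1 < int n"
      have d: "int n dvd (v 0 + v 1)" using h(1) by (simp add: mod_eq_0_iff_dvd)
      have "(- v 0) mod int n = v 1 mod int n" unfolding mod_eq_dvd_iff using d
        using dvd_minus_iff[of "int n" "v 0 + v 1"] by (simp add: algebra_simps)
      moreover have "(- v 1) mod int n = v 0 mod int n"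
      proof -
        have "- v 1 - v 0 = -(v 0 + v 1)" by simp
        then show ?thesis unfolding mod_eq_dvd_iff using d by (simp only: dvd_minus_iff)
      qed
      ultimately show "(- v 0) mod int n = v 1" "(- v 1) mod int n = v 0" using h by simp_all
    qed
    show "yoke_tau n 0 v i = yoke_psi n 0 v i"
    proof (cases "i = 0 \<or> i = 1")
      case True then show ?thesis using e1 e2 by (auto simp: yoke_tau_def yoke_psi_def)
    next
      case False then show ?thesis using v by (auto simp: yoke_tau_def yoke_psi_def V_iff)
    qed
  qed
  then show "T0 n 0 k a True v = T0 n 0 k (\<not> a) False v"
    using v assms by (cases a) (auto simp: T0_def psi_psi)
qed

lemma th_n1m1: "th 1 1 k True b = th 1 1 k False b"
proof (rule th_V_eq)
  fix v assume v: "v \<in> VV 1 1"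
  have p: "yoke_psi 1 1 w = w" if "w \<in> VV 1 1" for w
  proof
    fix i show "yoke_psi 1 1 w i = w i" using that
      by (cases "i = 0 \<or> i = 1 \<or> i = Suc (Suc 0)") (auto simp: yoke_psi_def V_iff)
  qed
  show "T0 1 1 k True b v = T0 1 1 k False b v"
    using v p tau_V[of v 1 1] by (auto simp: T0_def)
qed

lemma th_n2m0: "th 2 0 k True False = th 2 0 k False False"
proof (rule th_V_eq)
  fix v assume v: "v \<in> VV 2 0"
  have "yoke_psi 2 0 v = v"
  proof
    fix i
    have "v 0 = 0 \<or> v 0 = 1" "v 1 = 0 \<or> v 1 = 1" "(v 0 + v 1) mod 2 = 0" using v by (auto simp: V_iff)
    then have "v 0 = v 1" by auto
    then show "yoke_psi 2 0 v i = v i" using v by (cases "i = 0 \<or> i = 1") (auto simp: yoke_psi_def V_iff)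
  qed
  then show "T0 2 0 k True False v = T0 2 0 k False False v" by (simp add: T0_def)
qed

lemma th_n1m0: "th 1 0 k a b = th 1 0 0 False False"
proof (rule th_V_eq)
  fix v assume v: "v \<in> VV 1 0"
  have one: "w = (\<lambda>i. 0)" if "w \<in> VV 1 0" for w
  proof
    fix i show "w i = 0" using that by (cases "i = 0 \<or> i = 1") (auto simp: V_iff)
  qed
  show "T0 1 0 k a b v = T0 1 0 0 False False v"
  proof -
    have "T0 1 0 k a b v = (\<lambda>i. 0)" by (rule one, rule T0_V[OF _ v]) simp
    moreover have "T0 1 0 0 False False v = (\<lambda>i. 0)" by (rule one, rule T0_V[OF _ v]) simp
    ultimately show ?thesis by simp
  qed
qed

definition fk :: "int \<Rightarrow> nat \<Rightarrow> int \<Rightarrow> bool \<Rightarrow> int" where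
  "fk j m i c = i div 2 + (if odd i then j else 0) - (if c \<and> odd i then int m else 0)"
definition fa :: "int \<Rightarrow> bool \<Rightarrow> bool" where "fa i c = (c \<noteq> odd i)"

lemma key4a_odd: "odd (i + (if c then -i' else i')) = (odd i \<noteq> odd (i'::int))"
  by (cases c) auto

lemma key4a_fa: "fa (i + (if c then -i' else i')) (c \<noteq> c') = (fa i c \<noteq> fa i' c')"
  unfolding fa_def key4a_odd by auto

lemma divs: fixes i i' :: int shows
  "odd i \<Longrightarrow> odd i' \<Longrightarrow> (i + i') div 2 = i div 2 + i' div 2 + 1"
  "even i \<Longrightarrow> (i + i') div 2 = i div 2 + i' div 2"
  "even i' \<Longrightarrow> (i + i') div 2 = i div 2 + i' div 2"
  "odd i \<Longrightarrow> odd i' \<Longrightarrow> (i - i') div 2 = i div 2 - i' div 2"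
  "even i \<Longrightarrow> odd i' \<Longrightarrow> (i - i') div 2 = i div 2 - i' div 2 - 1"
  "even i' \<Longrightarrow> (i - i') div 2 = i div 2 - i' div 2"
  by presburger+

lemma key4a_k: assumes "2*j = int m + 1 + d"
  shows "fk j m (i + (if c then -i' else i')) (c \<noteq> c') - kc m (fk j m i c) (fa i c) (odd i) (fk j m i' c') (fa i' c') \<in> {0, d, -d}"
proof -
  have e: "odd (i + (if c then -i' else i')) = (odd i \<noteq> odd i')" by (rule key4a_odd)
  show ?thesis
  using assms unfolding fk_def fa_def kc_def e
  apply (cases c; cases c'; cases "odd i"; cases "odd i'")
  apply (simp_all add: divs)
  done
qed

lemma per4a: "fk j m (a + 2*N) c = fk j m a c + N" "odd (a + 2*N) = odd a"
  unfolding fk_def by (auto; presburger)+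

definition gk :: "int \<Rightarrow> int \<Rightarrow> bool \<Rightarrow> bool \<Rightarrow> int" where
  "gk h i c z = i + (if z then (if c then -h else h) else 0)"

lemma key4b: assumes "2*h = int m"
  shows "gk h (i + (if c then -i' else i')) (c \<noteq> c') (z \<noteq> z') = kc m (gk h i c z) (c \<noteq> z) z (gk h i' c' z') (c' \<noteq> z')"
  using assms unfolding gk_def kc_def by (cases c; cases c'; cases z; cases z') simp_all

lemma th_SS: "th n m k a b \<in> SS n m" by (auto simp: SS_def)

lemma th_cong: "k mod int n = k' mod int n \<Longrightarrow> th n m k a b = th n m k' a b"
  by (metis th_mod)

lemma th_cong_dvd: "int n dvd (k - k') \<Longrightarrow> a = a' \<Longrightarrow> b = b' \<Longrightarrow> th n m k a b = th n m k' a' b'"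
  by (simp add: th_cong mod_eq_dvd_iff)

lemma cmod_carrier: "n > 0 \<Longrightarrow> carrier (cyclic_group n) = {0..<int n}"
  by (simp add: integer_mod_group_def)
lemma cmod_mult: "n > 0 \<Longrightarrow> x \<otimes>\<^bsub>cyclic_group n\<^esub> y = (x + y) mod int n"
  by (simp add: integer_mod_group_def)

lemma case_10: "yoke_A 1 0 \<cong> cyclic_group 1"
proof (rule iso_enc[where f = "\<lambda>x. th 1 0 0 False False"])
  fix k a b show "\<exists>x\<in>carrier (cyclic_group 1). th 1 0 0 False False = th 1 0 k a b"
    using th_n1m0[of k a b] by (intro bexI[of _ 0]) (simp_all add: cmod_carrier)
next
  show "inj_on (\<lambda>x. th 1 0 0 False False) (carrier (cyclic_group 1))"
    by (auto simp: cmod_carrier inj_on_def)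
next
  fix x y assume "x \<in> carrier (cyclic_group 1)" "y \<in> carrier (cyclic_group 1)"
  then show "x \<otimes>\<^bsub>cyclic_group 1\<^esub> y \<in> carrier (cyclic_group 1)" by (simp add: cmod_carrier cmod_mult)
  show "th 1 0 0 False False = th 1 0 0 False False \<otimes>\<^bsub>yoke_aut 1 0\<^esub> th 1 0 0 False False"
    by (simp add: th_mult kc_def)
qed (simp_all add: th_SS)

lemma case_20: "yoke_A 2 0 \<cong> cyclic_group 2"
proof (rule iso_enc[where f = "\<lambda>x. th 2 0 x False False"])
  fix k a b show "\<exists>x\<in>carrier (cyclic_group 2). th 2 0 x False False = th 2 0 k a b"
  proof (rule bexI[of _ "k mod 2"])
    have "th 2 0 k a b = th 2 0 k False False"
      by (cases a; cases b) (simp_all add: th_m0 th_n2m0)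
    then show "th 2 0 (k mod 2) False False = th 2 0 k a b" using th_mod[of 2 0 k] by simp
  qed (simp add: cmod_carrier)
next
  show "inj_on (\<lambda>x. th 2 0 x False False) (carrier (cyclic_group 2))"
    by (auto simp: cmod_carrier inj_on_def dest!: sep_k[rotated])
next
  fix x y assume "x \<in> carrier (cyclic_group 2)" "y \<in> carrier (cyclic_group 2)"
  then show "x \<otimes>\<^bsub>cyclic_group 2\<^esub> y \<in> carrier (cyclic_group 2)" by (simp add: cmod_carrier cmod_mult)
  show "th 2 0 (x \<otimes>\<^bsub>cyclic_group 2\<^esub> y) False False = th 2 0 x False False \<otimes>\<^bsub>yoke_aut 2 0\<^esub> th 2 0 y False False"
    using th_mod[of 2 0 "x+y"] by (simp add: th_mult kc_def cmod_mult)
qed (simp_all add: th_SS)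

lemma case_11: "yoke_A 1 1 \<cong> cyclic_group 2"
proof (rule iso_enc[where f = "\<lambda>x. th 1 1 0 False (x = 1)"])
  fix k a b show "\<exists>x\<in>carrier (cyclic_group 2). th 1 1 0 False (x = 1) = th 1 1 k a b"
  proof (rule bexI[of _ "if b then 1 else 0"])
    have "th 1 1 k a b = th 1 1 0 a b" using th_mod[of 1 1 k a b] by simp
    also have "\<dots> = th 1 1 0 False b" using th_n1m1[of 0 b] by (cases a) simp_all
    finally show "th 1 1 0 False ((if b then 1 else 0) = (1::int)) = th 1 1 k a b" by simp
  qed (simp add: cmod_carrier)
next
  show "inj_on (\<lambda>x. th 1 1 0 False (x = 1)) (carrier (cyclic_group 2))"
    by (auto simp: cmod_carrier inj_on_def dest!: sep_b[rotated 2])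
next
  fix x y assume xy: "x \<in> carrier (cyclic_group 2)" "y \<in> carrier (cyclic_group 2)"
  then show "x \<otimes>\<^bsub>cyclic_group 2\<^esub> y \<in> carrier (cyclic_group 2)" by (simp add: cmod_carrier cmod_mult)
  have "((x + y) mod 2 = 1) = ((x = 1) \<noteq> (y = 1))" using xy by (auto simp: cmod_carrier)
  then show "th 1 1 0 False (x \<otimes>\<^bsub>cyclic_group 2\<^esub> y = 1) = th 1 1 0 False (x = 1) \<otimes>\<^bsub>yoke_aut 1 1\<^esub> th 1 1 0 False (y = 1)"
    by (simp add: th_mult kc_def cmod_mult)
qed (simp_all add: th_SS)

lemma case_1m: assumes "m > 1" shows "yoke_A 1 m \<cong> cyclic_group 2 \<times>\<times> cyclic_group 2"
proof (rule iso_enc[where f = "\<lambda>(x,y). th 1 m 0 (x = 1) (y = 1)"])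
  fix k a b show "\<exists>x\<in>carrier (cyclic_group 2 \<times>\<times> cyclic_group 2). (\<lambda>(x,y). th 1 m 0 (x = 1) (y = 1)) x = th 1 m k a b"
  proof (rule bexI[of _ "(if a then (1::int) else 0, if b then (1::int) else 0)"])
    have "th 1 m k a b = th 1 m 0 a b" using th_mod[of 1 m k a b] by simp
    then show "(\<lambda>(x,y). th 1 m 0 (x = 1) (y = 1)) (if a then (1::int) else 0, if b then (1::int) else 0) = th 1 m k a b" by simp
  qed (simp add: cmod_carrier DirProd_def)
next
  show "inj_on (\<lambda>(x,y). th 1 m 0 (x = 1) (y = 1)) (carrier (cyclic_group 2 \<times>\<times> cyclic_group 2))"
  proof (rule inj_onI)
    fix p q assume p: "p \<in> carrier (cyclic_group 2 \<times>\<times> cyclic_group 2)" and q: "q \<in> carrier (cyclic_group 2 \<times>\<times> cyclic_group 2)"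
      and hh: "(\<lambda>(x,y). th 1 m 0 (x = 1) (y = 1)) p = (\<lambda>(x,y). th 1 m 0 (x = 1) (y = 1)) q"
    obtain x y x' y' where e: "p = (x, y)" "q = (x', y')" by fastforce
    have h: "th 1 m 0 (x = 1) (y = 1) = th 1 m 0 (x' = 1) (y' = 1)" "0 \<le> x" "x < 2" "0 \<le> y" "y < 2"
      "0 \<le> x'" "x' < 2" "0 \<le> y'" "y' < 2" using hh p q by (auto simp: e DirProd_def cmod_carrier)
    have "(y = 1) = (y' = 1)" using sep_b[OF _ _ h(1)] assms by simp
    moreover have "(x = 1) = (x' = 1)" using sep_a1[OF assms] h(1) calculation by simp
    ultimately show "p = q" using h by (auto simp: e)
  qed
next
  fix x y assume xy: "x \<in> carrier (cyclic_group 2 \<times>\<times> cyclic_group 2)" "y \<in> carrier (cyclic_group 2 \<times>\<times> cyclic_group 2)"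
  then show "x \<otimes>\<^bsub>cyclic_group 2 \<times>\<times> cyclic_group 2\<^esub> y \<in> carrier (cyclic_group 2 \<times>\<times> cyclic_group 2)"
    by (auto simp: cmod_carrier cmod_mult DirProd_def)
  obtain x1 x2 y1 y2 where e: "x = (x1, x2)" "y = (y1, y2)" by fastforce
  have b: "((x1 + y1) mod 2 = 1) = ((x1 = 1) \<noteq> (y1 = 1))" "((x2 + y2) mod 2 = 1) = ((x2 = 1) \<noteq> (y2 = 1))"
    using xy by (auto simp: cmod_carrier DirProd_def e)
  have t: "th (Suc 0) m k a b = th (Suc 0) m 0 a b" for k a b using th_mod[of 1 m k a b] by simp
  show "(\<lambda>(x,y). th 1 m 0 (x = 1) (y = 1)) (x \<otimes>\<^bsub>cyclic_group 2 \<times>\<times> cyclic_group 2\<^esub> y) =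
        (\<lambda>(x,y). th 1 m 0 (x = 1) (y = 1)) x \<otimes>\<^bsub>yoke_aut 1 m\<^esub> (\<lambda>(x,y). th 1 m 0 (x = 1) (y = 1)) y"
    using b by (simp add: e DirProd_def cmod_mult th_mult) (rule t[symmetric])
qed (auto simp: th_SS)

lemma dih_carrier: "carrier (dihedral_group k) = {0..<int k} \<times> UNIV"
  by (simp add: dihedral_group_def)
lemma dih_mult: "(i, a) \<otimes>\<^bsub>dihedral_group k\<^esub> (j, b) = ((i + (if a then - j else j)) mod int k, a \<noteq> b)"
  by (simp add: dihedral_group_def)

lemma case_n0: assumes "n > 2" shows "yoke_A n 0 \<cong> dihedral_group n"
proof (rule iso_enc[where f = "\<lambda>(i,c). th n 0 i c False"])
  show "0 < n" using assms by simp
  fix k a b show "\<exists>x\<in>carrier (dihedral_group n). (\<lambda>(i,c). th n 0 i c False) x = th n 0 k a b"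
  proof (rule bexI[of _ "(k mod int n, a \<noteq> b)"])
    have "th n 0 k a b = th n 0 k (a \<noteq> b) False" using assms by (cases b) (simp_all add: th_m0)
    then show "(\<lambda>(i,c). th n 0 i c False) (k mod int n, a \<noteq> b) = th n 0 k a b" by (simp add: th_mod)
  qed (use assms in \<open>simp add: dih_carrier\<close>)
next
  show "inj_on (\<lambda>(i,c). th n 0 i c False) (carrier (dihedral_group n))"
  proof (rule inj_onI)
    fix p q assume p: "p \<in> carrier (dihedral_group n)" and q: "q \<in> carrier (dihedral_group n)"
      and hh: "(\<lambda>(i,c). th n 0 i c False) p = (\<lambda>(i,c). th n 0 i c False) q"
    obtain i c i' c' where e: "p = (i, c)" "q = (i', c')" by fastforce
    have h: "th n 0 i c False = th n 0 i' c' False" "0 \<le> i" "i < int n" "0 \<le> i'" "i' < int n"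
      using hh p q by (auto simp: e dih_carrier)
    have "c = c'" using sep_a[OF _ h(1)] assms by simp
    moreover have "i mod int n = i' mod int n" by (rule sep_k[of n 0 i c False i']) (use h(1) calculation assms in auto)
    ultimately show "p = q" using h by (simp add: e)
  qed
next
  fix x y assume "x \<in> carrier (dihedral_group n)" "y \<in> carrier (dihedral_group n)"
  then show "x \<otimes>\<^bsub>dihedral_group n\<^esub> y \<in> carrier (dihedral_group n)" using assms
    by (cases x; cases y) (simp add: dih_carrier dih_mult)
  obtain i c j d where e: "x = (i, c)" "y = (j, d)" by fastforce
  show "(\<lambda>(i,c). th n 0 i c False) (x \<otimes>\<^bsub>dihedral_group n\<^esub> y) =
        (\<lambda>(i,c). th n 0 i c False) x \<otimes>\<^bsub>yoke_aut n 0\<^esub> (\<lambda>(i,c). th n 0 i c False) y"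
    using assms by (simp add: e dih_mult th_mult th_mod kc_def)
qed (auto simp: th_SS)

lemma case_4a: assumes "n > 1" "m > 0" "odd n \<or> odd m" shows "yoke_A n m \<cong> dihedral_group (2*n)"
proof -
  have n0: "n > 0" using assms by simp
  obtain j d where jd: "2*j = int m + 1 + d" "int n dvd d"
  proof (cases "odd m")
    case True
    then have "2 * ((int m + 1) div 2) = int m + 1 + 0" by presburger
    then show ?thesis using that[of "(int m + 1) div 2" 0] by simp
  next
    case False
    then have "odd n" using assms by simp
    with False have "2 * ((int m + 1 + int n) div 2) = int m + 1 + int n" by presburger
    then show ?thesis using that[of "(int m + 1 + int n) div 2" "int n"] by simp
  qed
  show ?thesis
  proof (rule iso_enc[where f = "\<lambda>(i,c). th n m (fk j m i c) (fa i c) (odd i)"])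
    show "0 < n" by (rule n0)
  next
    fix x assume "x \<in> carrier (dihedral_group (2*n))"
    then show "(\<lambda>(i,c). th n m (fk j m i c) (fa i c) (odd i)) x \<in> SS n m" by (cases x) (simp add: th_SS)
  next
    fix k :: int and a b :: bool
    define c where "c = (a \<noteq> b)"
    define kx where "kx = k - (if b then j else 0) + (if c \<and> b then int m else 0)"
    define i where "i = 2 * (kx mod int n) + (if b then 1 else 0)"
    have "0 \<le> kx mod int n" "kx mod int n < int n" using n0 by simp_all
    then have ib: "0 \<le> i" "i < 2 * int n" unfolding i_def by auto
    have oi: "odd i = b" by (simp add: i_def)
    have di: "i div 2 = kx mod int n" by (simp add: i_def)
    have fki: "fk j m i c = kx mod int n + (if b then j else 0) - (if c \<and> b then int m else 0)"
      by (simp add: fk_def oi di)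
    have "fk j m i c - k = kx mod int n - kx" by (simp add: fki kx_def)
    then have "int n dvd (fk j m i c - k)" using dm[of "int n" kx] by simp
    moreover have "fa i c = a" by (auto simp: fa_def oi c_def)
    ultimately have "th n m (fk j m i c) (fa i c) (odd i) = th n m k a b"
      by (intro th_cong_dvd) (simp_all add: oi)
    then show "\<exists>x\<in>carrier (dihedral_group (2*n)). (\<lambda>(i,c). th n m (fk j m i c) (fa i c) (odd i)) x = th n m k a b"
      using ib by (intro bexI[of _ "(i, c)"]) (simp_all add: dih_carrier)
  next
    show "inj_on (\<lambda>(i,c). th n m (fk j m i c) (fa i c) (odd i)) (carrier (dihedral_group (2*n)))"
    proof (rule inj_onI)
      fix p q assume p: "p \<in> carrier (dihedral_group (2*n))" and q: "q \<in> carrier (dihedral_group (2*n))"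
        and hh: "(\<lambda>(i,c). th n m (fk j m i c) (fa i c) (odd i)) p = (\<lambda>(i,c). th n m (fk j m i c) (fa i c) (odd i)) q"
      obtain i c i' c' where e: "p = (i, c)" "q = (i', c')" by fastforce
      have h: "th n m (fk j m i c) (fa i c) (odd i) = th n m (fk j m i' c') (fa i' c') (odd i')"
        "0 \<le> i" "i < 2 * int n" "0 \<le> i'" "i' < 2 * int n"
        using hh p q by (auto simp: e dih_carrier)
      have o: "odd i = odd i'" by (rule sep_b[OF n0 assms(2) h(1)])
      have h2: "th n m (fk j m i c) (fa i c) (odd i) = th n m (fk j m i' c') (fa i' c') (odd i)"
        using h(1) o by simp
      have "fa i c = fa i' c'" by (rule sep_a[OF assms(1) h2]) (use assms in auto)
      then have cc: "c = c'" using o by (auto simp: fa_def)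
      have h3: "th n m (fk j m i c) (fa i c) (odd i) = th n m (fk j m i' c) (fa i c) (odd i)"
        using h2 cc o by (simp add: fa_def)
      have "fk j m i c mod int n = fk j m i' c mod int n" by (rule sep_k[OF n0 h3])
      moreover have "fk j m i c - fk j m i' c = i div 2 - i' div 2" using o by (simp add: fk_def)
      ultimately have dv: "int n dvd (i div 2 - i' div 2)" by (simp add: mod_eq_dvd_iff)
      have "i div 2 - i' div 2 = 0"
      proof (rule ccontr)
        assume ne: "i div 2 - i' div 2 \<noteq> 0"
        have "i div 2 < int n" "i' div 2 < int n" "0 \<le> i div 2" "0 \<le> i' div 2" using h by auto
        then show False using ne dv ndvd1[of n "i div 2 - i' div 2"] ndvd2[of n "i div 2 - i' div 2"] by linarith
      qed
      then have "i = i'" using o by presburger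
      then show "p = q" using cc by (simp add: e)
    qed
  next
    fix x y assume x: "x \<in> carrier (dihedral_group (2*n))" and y: "y \<in> carrier (dihedral_group (2*n))"
    obtain i c i' c' where e: "x = (i, c)" "y = (i', c')" by fastforce
    show "x \<otimes>\<^bsub>dihedral_group (2*n)\<^esub> y \<in> carrier (dihedral_group (2*n))"
      using n0 by (simp add: e dih_carrier dih_mult)
    define r where "r = i + (if c then -i' else i')"
    define N where "N = - (int n * (r div (2 * int n)))"
    have rN: "r mod (2 * int n) = r + 2 * N" by (simp add: N_def minus_div_mult_eq_mod[symmetric] algebra_simps)
    have "x \<otimes>\<^bsub>dihedral_group (2*n)\<^esub> y = (r + 2 * N, c \<noteq> c')"
      by (simp add: e dih_mult r_def[symmetric] rN[symmetric])
    then have "(\<lambda>(i,c). th n m (fk j m i c) (fa i c) (odd i)) (x \<otimes>\<^bsub>dihedral_group (2*n)\<^esub> y)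
        = th n m (fk j m r (c \<noteq> c') + N) (fa r (c \<noteq> c')) (odd r)"
      by (simp add: per4a fa_def)
    also have "\<dots> = th n m (kc m (fk j m i c) (fa i c) (odd i) (fk j m i' c') (fa i' c')) (fa i c \<noteq> fa i' c') (odd i \<noteq> odd i')"
    proof (rule th_cong_dvd)
      have "int n dvd N" by (simp add: N_def)
      moreover have "int n dvd (fk j m r (c \<noteq> c') - kc m (fk j m i c) (fa i c) (odd i) (fk j m i' c') (fa i' c'))"
        using key4a_k[OF jd(1), of i c i' c'] jd(2) unfolding r_def by auto
      ultimately show "int n dvd (fk j m r (c \<noteq> c') + N - kc m (fk j m i c) (fa i c) (odd i) (fk j m i' c') (fa i' c'))"
        by (metis (no_types, lifting) add_diff_eq diff_add_eq dvd_add)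
      show "fa r (c \<noteq> c') = (fa i c \<noteq> fa i' c')" unfolding r_def by (rule key4a_fa)
      show "odd r = (odd i \<noteq> odd i')" unfolding r_def by (rule key4a_odd)
    qed
    also have "\<dots> = (\<lambda>(i,c). th n m (fk j m i c) (fa i c) (odd i)) x \<otimes>\<^bsub>yoke_aut n m\<^esub> (\<lambda>(i,c). th n m (fk j m i c) (fa i c) (odd i)) y"
      using n0 by (simp add: e th_mult)
    finally show "(\<lambda>(i,c). th n m (fk j m i c) (fa i c) (odd i)) (x \<otimes>\<^bsub>dihedral_group (2*n)\<^esub> y) =
        (\<lambda>(i,c). th n m (fk j m i c) (fa i c) (odd i)) x \<otimes>\<^bsub>yoke_aut n m\<^esub> (\<lambda>(i,c). th n m (fk j m i c) (fa i c) (odd i)) y" .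
  qed
qed

lemma case_4b: assumes "n > 1" "m > 0" "even n" "even m"
  shows "yoke_A n m \<cong> dihedral_group n \<times>\<times> cyclic_group 2"
proof -
  have n0: "n > 0" using assms by simp
  define h where "h = int m div 2"
  have hm: "2 * h = int m" using assms(4) unfolding h_def by presburger
  let ?G = "dihedral_group n \<times>\<times> cyclic_group 2"
  let ?f = "\<lambda>((i,c),z). th n m (gk h i c (z = 1)) (c \<noteq> (z = 1)) (z = (1::int))"
  have carG: "carrier ?G = ({0..<int n} \<times> UNIV) \<times> {0..<2}"
    by (simp add: DirProd_def dih_carrier cmod_carrier)
  have mulG: "((i, c), z) \<otimes>\<^bsub>?G\<^esub> ((i', c'), z') = (((i + (if c then -i' else i')) mod int n, c \<noteq> c'), (z + z') mod 2)"
    for i c z i' c' z' by (simp add: DirProd_def dih_mult cmod_mult)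
  show ?thesis
  proof (rule iso_enc[where f = ?f])
    show "0 < n" by (rule n0)
  next
    fix x assume "x \<in> carrier ?G"
    then show "?f x \<in> SS n m" by (auto simp: th_SS)
  next
    fix k :: int and a b :: bool
    define c where "c = (a \<noteq> b)"
    define kx where "kx = k - (if b then (if c then -h else h) else 0)"
    define i where "i = kx mod int n"
    define z where "z = (if b then 1 else (0::int))"
    have "gk h i c (z = 1) - k = kx mod int n - kx"
      by (simp add: gk_def z_def i_def kx_def)
    then have "int n dvd (gk h i c (z = 1) - k)" using dm[of "int n" kx] by simp
    then have "th n m (gk h i c (z = 1)) (c \<noteq> (z = 1)) (z = 1) = th n m k a b"
      by (intro th_cong_dvd) (auto simp: z_def c_def)
    moreover have "((i, c), z) \<in> carrier ?G" using n0 by (simp add: DirProd_def dih_carrier cmod_carrier i_def z_def)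
    ultimately show "\<exists>x\<in>carrier ?G. ?f x = th n m k a b"
      by (intro bexI[of _ "((i, c), z)"]) simp_all
  next
    show "inj_on ?f (carrier ?G)"
    proof (rule inj_onI)
      fix p q assume p: "p \<in> carrier ?G" and q: "q \<in> carrier ?G" and hh: "?f p = ?f q"
      obtain i c z i' c' z' where e: "p = ((i, c), z)" "q = ((i', c'), z')" by (metis prod.collapse)
      have h: "th n m (gk h i c (z = 1)) (c \<noteq> (z = 1)) (z = 1) = th n m (gk h i' c' (z' = 1)) (c' \<noteq> (z' = 1)) (z' = 1)"
        "0 \<le> i" "i < int n" "0 \<le> i'" "i' < int n" "z \<in> {0,1}" "z' \<in> {0,1}"
        using hh p q n0 by (auto simp: e DirProd_def dih_carrier cmod_carrier)
      have zz: "(z = 1) = (z' = 1)" by (rule sep_b[OF n0 assms(2) h(1)])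
      then have zeq: "z = z'" using h(6,7) by auto
      have h2: "th n m (gk h i c (z = 1)) (c \<noteq> (z = 1)) (z = 1) = th n m (gk h i' c' (z = 1)) (c' \<noteq> (z = 1)) (z = 1)"
        using h(1) zeq by simp
      have "(c \<noteq> (z = 1)) = (c' \<noteq> (z = 1))" by (rule sep_a[OF assms(1) h2]) (use assms in auto)
      then have cc: "c = c'" by auto
      have h3: "th n m (gk h i c (z = 1)) (c \<noteq> (z = 1)) (z = 1) = th n m (gk h i' c (z = 1)) (c \<noteq> (z = 1)) (z = 1)"
        using h2 cc by simp
      have "gk h i c (z = 1) mod int n = gk h i' c (z = 1) mod int n" by (rule sep_k[OF n0 h3])
      moreover have "gk h i c (z = 1) - gk h i' c (z = 1) = i - i'" by (simp add: gk_def)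
      ultimately have dv: "int n dvd (i - i')" by (simp add: mod_eq_dvd_iff)
      have "i - i' = 0"
      proof (rule ccontr)
        assume ne: "i - i' \<noteq> 0"
        then show False using dv h(2-5) ndvd1[of n "i - i'"] ndvd2[of n "i - i'"] by linarith
      qed
      then show "p = q" using cc zeq by (simp add: e)
    qed
  next
    fix x y assume x: "x \<in> carrier ?G" and y: "y \<in> carrier ?G"
    obtain i c z i' c' z' where e: "x = ((i, c), z)" "y = ((i', c'), z')" by (metis prod.collapse)
    have zs: "z \<in> {0,1}" "z' \<in> {0,1}" using x y n0 by (auto simp: e DirProd_def dih_carrier cmod_carrier)
    show "x \<otimes>\<^bsub>?G\<^esub> y \<in> carrier ?G" using n0 unfolding e mulG by (simp add: DirProd_def dih_carrier cmod_carrier)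
    define r where "r = i + (if c then -i' else i')"
    have zb: "((z + z') mod 2 = 1) = ((z = 1) \<noteq> (z' = 1))" using zs by auto
    have "?f (x \<otimes>\<^bsub>?G\<^esub> y) = th n m (gk h (r mod int n) (c \<noteq> c') ((z = 1) \<noteq> (z' = 1)))
          ((c \<noteq> c') \<noteq> ((z = 1) \<noteq> (z' = 1))) ((z = 1) \<noteq> (z' = 1))"
      unfolding e mulG by (simp add: r_def[symmetric] zb)
    also have "\<dots> = th n m (gk h r (c \<noteq> c') ((z = 1) \<noteq> (z' = 1)))
          ((c \<noteq> (z = 1)) \<noteq> (c' \<noteq> (z' = 1))) ((z = 1) \<noteq> (z' = 1))"
    proof (rule th_cong_dvd)
      have "gk h (r mod int n) (c \<noteq> c') ((z = 1) \<noteq> (z' = 1)) - gk h r (c \<noteq> c') ((z = 1) \<noteq> (z' = 1)) = r mod int n - r"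
        by (simp add: gk_def)
      then show "int n dvd (gk h (r mod int n) (c \<noteq> c') ((z = 1) \<noteq> (z' = 1)) - gk h r (c \<noteq> c') ((z = 1) \<noteq> (z' = 1)))"
        using dm[of "int n" r] by simp
    qed auto
    also have "\<dots> = th n m (kc m (gk h i c (z = 1)) (c \<noteq> (z = 1)) (z = 1) (gk h i' c' (z' = 1)) (c' \<noteq> (z' = 1)))
          ((c \<noteq> (z = 1)) \<noteq> (c' \<noteq> (z' = 1))) ((z = 1) \<noteq> (z' = 1))"
      unfolding r_def key4b[OF hm] ..
    also have "\<dots> = ?f x \<otimes>\<^bsub>yoke_aut n m\<^esub> ?f y"
      using n0 by (simp add: e th_mult)
    finally show "?f (x \<otimes>\<^bsub>?G\<^esub> y) = ?f x \<otimes>\<^bsub>yoke_aut n m\<^esub> ?f y" .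
  qed
qed

theorem theorem6p4:
  shows "yoke_A 1 0 \<cong> cyclic_group 1
    \<and> yoke_A 2 0 \<cong> cyclic_group 2 \<and> yoke_A 1 1 \<cong> cyclic_group 2
    \<and> (\<forall>n>2. yoke_A n 0 \<cong> dihedral_group n)
    \<and> (\<forall>m>1. yoke_A 1 m \<cong> cyclic_group 2 \<times>\<times> cyclic_group 2)
    \<and> (\<forall>n m. n > 1 \<and> m > 0 \<longrightarrow>
          ((odd n \<or> odd m) \<longrightarrow> yoke_A n m \<cong> dihedral_group (2*n))
        \<and> ((even n \<and> even m) \<longrightarrow> yoke_A n m \<cong> dihedral_group n \<times>\<times> cyclic_group 2))"
proof -
  have 4: "\<forall>n m. n > 1 \<and> m > 0 \<longrightarrow>
          ((odd n \<or> odd m) \<longrightarrow> yoke_A n m \<cong> dihedral_group (2*n))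
        \<and> ((even n \<and> even m) \<longrightarrow> yoke_A n m \<cong> dihedral_group n \<times>\<times> cyclic_group 2)"
    using case_4a case_4b by blast
  show ?thesis using case_10 case_20 case_11 case_n0 case_1m 4 by blast
qed

end
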